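(* Let $m\in\mathbb{N}$, let $\|\cdot\|$ be an arbitrary norm on $\mathbb{R}^m$, and let $\varepsilon>0$. Set $n(m):=\lceil \log_2(m+1)\rceil+1$. Then there exists an algorithm $R_m^\varepsilon\colon\mathbb{R}^m\to\mathbb{R}^m$ that uses at most $n(m)$ adaptively chosen measurements, each of which is a Lipschitz-continuous functional $\mathbb{R}^m\to\mathbb{R}$ (with Lipschitz constant $1$ with respect to $\|\cdot\|$), such that \[ \|x-R_m^\varepsilon(x)\|\le\varepsilon\qquad\text{for all }x\in\mathbb{R}^m. \]
   Context: An algorithm using at most $n$ adaptive measurements on $\mathbb{R}^m$ is a map of the form $x\mapsto \Phi(y_1,\dots,y_n)$, where $y_1=\lambda_1(x)$ for a fixed functional $\lambda_1\colon\mathbb{R}^m\to\mathbb{R}$, and for $k\ge 2$, $y_k=\lambda_k^{(y_1,\dots,y_{k-1})}(x)$, where the functional $\lambda_k^{(y_1,\dots,y_{k-1})}\colon\mathbb{R}^m\to\mathbb{R}$ may depend in an arbitrary way on the previously computed values $y_1,\dots,y_{k-1}$; the reconstruction map $\Phi\colon\mathbb{R}^n\to\mathbb{R}^m$ is arbitrary (not necessarily continuous). Here every functional that may ever be used is required to be Lipschitz continuous. *)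

theory Defs
  imports "HOL-Analysis.Analysis"
begin

text \<open>R^m is represented as the functions nat => real vanishing outside {..<m}.\<close>
definition vecs :: "nat \<Rightarrow> (nat \<Rightarrow> real) set" where
  "vecs m = {x. \<forall>i\<ge>m. x i = 0}"

definition is_norm_on :: "nat \<Rightarrow> ((nat \<Rightarrow> real) \<Rightarrow> real) \<Rightarrow> bool" where
  "is_norm_on m N \<longleftrightarrow>
     (\<forall>x\<in>vecs m. 0 \<le> N x) \<and>
     (\<forall>x\<in>vecs m. N x = 0 \<longleftrightarrow> x = (\<lambda>i. 0)) \<and>
     (\<forall>c. \<forall>x\<in>vecs m. N (\<lambda>i. c * x i) = \<bar>c\<bar> * N x) \<and>
     (\<forall>x\<in>vecs m. \<forall>y\<in>vecs m. N (\<lambda>i. x i + y i) \<le> N x + N y)"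

text \<open>Adaptive measurements: the k-th functional is L applied to the list of previously
  computed values; adaptive_meas L k x is the list [y_1,...,y_k].\<close>
fun adaptive_meas :: "(real list \<Rightarrow> (nat \<Rightarrow> real) \<Rightarrow> real) \<Rightarrow> nat \<Rightarrow> (nat \<Rightarrow> real) \<Rightarrow> real list" where
  "adaptive_meas L 0 x = []"
| "adaptive_meas L (Suc k) x = (let ys = adaptive_meas L k x in ys @ [L ys x])"

end

theory Submission
  imports Defs
begin


definition rho :: "real \<Rightarrow> real" where "rho t = infdist t \<int>"

lemma rho_lt: assumes "rho t < e" shows "\<exists>n::int. \<bar>t - of_int n\<bar> < e"
proof (rule ccontr)
  assume "\<not> ?thesis"
  then have "\<forall>a\<in>\<int>. e \<le> dist t a" by (force simp: dist_real_def not_less elim!: Ints_cases)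
  then have "e \<le> rho t" unfolding rho_def infdist_def
    by (auto intro!: cINF_greatest)
  then show False using assms by simp
qed

lemma rho_le_int: "rho t \<le> \<bar>t - of_int n\<bar>"
  unfolding rho_def using infdist_le[of "of_int n" \<int> t] by (simp add: dist_real_def)

lemma rho_lip: "\<bar>rho a - rho b\<bar> \<le> \<bar>a - b\<bar>"
  unfolding rho_def using infdist_triangle_abs[of a \<int> b] by (simp add: dist_real_def)

lemma rho_floor: fixes t :: real assumes "w \<le> rho t" shows "w \<le> t - of_int \<lfloor>t\<rfloor>" "w \<le> of_int \<lfloor>t\<rfloor> + 1 - t"
proof -
  show "w \<le> t - of_int \<lfloor>t\<rfloor>" using assms rho_le_int[of t "\<lfloor>t\<rfloor>"] by linarith
  show "w \<le> of_int \<lfloor>t\<rfloor> + 1 - t" using assms rho_le_int[of t "\<lfloor>t\<rfloor> + 1"] 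
    by linarith
qed

lemma floor_sep: fixes t t' :: real assumes "w \<le> rho t" "w \<le> rho t'" "\<lfloor>t\<rfloor> \<noteq> \<lfloor>t'\<rfloor>"
  shows "2 * w \<le> \<bar>t - t'\<bar>"
proof (cases "\<lfloor>t\<rfloor> < \<lfloor>t'\<rfloor>")
  case True
  then have "real_of_int \<lfloor>t\<rfloor> + 1 \<le> real_of_int \<lfloor>t'\<rfloor>" by linarith
  then show ?thesis using rho_floor[OF assms(1)] rho_floor[OF assms(2)] by linarith
next
  case False
  then have "real_of_int \<lfloor>t'\<rfloor> + 1 \<le> real_of_int \<lfloor>t\<rfloor>" using assms(3) by linarith
  then show ?thesis using rho_floor[OF assms(1)] rho_floor[OF assms(2)] by linarith
qed

lemma bad_unique:
  fixes M :: nat and c c' :: nat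
  assumes M: "M > 0" and c: "c < M" "c' < M"
    and b1: "rho (t - real c / M) < 1 / (2 * M)" and b2: "rho (t - real c' / M) < 1 / (2 * M)"
  shows "c = c'"
proof -
  obtain n :: int where n: "\<bar>t - real c / M - n\<bar> < 1 / (2 * M)" using rho_lt[OF b1] by blast
  obtain n' :: int where n': "\<bar>t - real c' / M - n'\<bar> < 1 / (2 * M)" using rho_lt[OF b2] by blast
  have "\<bar>(t - real c / M - n) - (t - real c' / M - n')\<bar> < 1 / (2 * M) + 1 / (2 * M)"
    using n n' by linarith
  also have "\<dots> = 1 / M" by simp
  also have "(t - real c / M - n) - (t - real c' / M - n') = ((real c' - real c) + (n' - n) * M) / M"
    using M by (simp add: field_simps)
  finally have "\<bar>(real c' - real c) + (n' - n) * M\<bar> / M < 1 / M" by simp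
  then have "\<bar>(real c' - real c) + (n' - n) * M\<bar> < 1"
    using M by (simp add: divide_less_cancel)
  moreover have "(real c' - real c) + (n' - n) * M = real_of_int ((int c' - int c) + (n' - n) * int M)"
    by simp
  ultimately have "\<bar>real_of_int ((int c' - int c) + (n' - n) * int M)\<bar> < 1" by simp
  then have "\<bar>(int c' - int c) + (n' - n) * int M\<bar> < 1"
    by (metis of_int_abs of_int_less_1_iff)
  then have d: "int c' - int c = (n - n') * int M" by (simp add: algebra_simps)
  show ?thesis
  proof (cases "n = n'")
    case True then show ?thesis using d by simp
  next
    case False
    then have "n - n' \<ge> 1 \<or> n - n' \<le> -1" by linarith
    then show ?thesis
    proof
      assume "n - n' \<ge> 1"
      then have "(n - n') * int M \<ge> int M" using mult_right_mono[of 1 "n-n'" "int M"] by simp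
      then show ?thesis using d c by linarith
    next
      assume "n - n' \<le> -1"
      then have "(n - n') * int M \<le> - int M" using mult_right_mono[of "n-n'" "-1" "int M"] by simp
      then show ?thesis using d c by linarith
    qed
  qed
qed

lemma covering:
  fixes M :: nat and t :: "nat \<Rightarrow> real"
  assumes "M > m"
  shows "\<exists>c<M. \<forall>i<m. 1 / (2 * M) \<le> rho (t i - real c / M)"
proof -
  define Bad where "Bad i = {c. c < M \<and> rho (t i - real c / M) < 1 / (2 * M)}" for i
  have fin: "finite (Bad i)" for i unfolding Bad_def by auto
  have cb: "card (Bad i) \<le> 1" for i
    using card_le_Suc0_iff_eq[OF fin] bad_unique[of M] assms unfolding Bad_def by auto
  then have "card (\<Union>i<m. Bad i) \<le> m"
  proof -
    have "(\<Sum>i<m. card (Bad i)) \<le> (\<Sum>i<m. 1)" by (rule sum_mono) (rule cb)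
    then show ?thesis using card_UN_le[of "{..<m}" Bad] by simp
  qed
  then have "\<not> {..<M} \<subseteq> (\<Union>i<m. Bad i)"
    using card_mono[of "\<Union>i<m. Bad i" "{..<M}"] fin assms by auto
  then obtain c where "c < M" "c \<notin> (\<Union>i<m. Bad i)" by auto
  then show ?thesis by (intro exI[of _ c]) (auto simp: Bad_def not_less)
qed




definition Fn :: "((nat\<Rightarrow>real)\<Rightarrow>real) \<Rightarrow> ((nat\<Rightarrow>real)\<Rightarrow>real) \<Rightarrow> (nat\<Rightarrow>real) set \<Rightarrow> (nat\<Rightarrow>real) \<Rightarrow> real" where
  "Fn N a P x = (if P = {} then 1 else Inf ((\<lambda>p. a p + N (\<lambda>i. x i - p i)) ` P))"
definition tco :: "real \<Rightarrow> nat \<Rightarrow> nat \<Rightarrow> (nat\<Rightarrow>real) \<Rightarrow> nat \<Rightarrow> real" where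
  "tco s M c x i = x i / s - real c / real M"
definition UU :: "nat \<Rightarrow> real \<Rightarrow> nat \<Rightarrow> nat \<Rightarrow> (nat\<Rightarrow>real) set" where
  "UU m s M c = {x \<in> vecs m. \<forall>i<m. 1 / (2 * M) \<le> rho (tco s M c x i)}"
definition WW :: "nat \<Rightarrow> real \<Rightarrow> nat \<Rightarrow> nat set \<Rightarrow> (nat\<Rightarrow>real) set" where
  "WW m s M A = {x. \<exists>c\<in>A. x \<in> UU m s M c}"
definition key :: "nat \<Rightarrow> real \<Rightarrow> nat \<Rightarrow> nat \<Rightarrow> (nat\<Rightarrow>real) \<Rightarrow> int list" where
  "key m s M c x = map (\<lambda>i. \<lfloor>tco s M c x i\<rfloor>) [0..<m]"
definition hh :: "real \<Rightarrow> int list \<Rightarrow> real" where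
  "hh d k = d / (1 + real (to_nat k))"
definition rep :: "nat \<Rightarrow> real \<Rightarrow> nat \<Rightarrow> nat \<Rightarrow> int list \<Rightarrow> nat \<Rightarrow> real" where
  "rep m s M c k = (\<lambda>i. if i < m then s * (of_int (k!i) + real c / M + 1/2) else 0)"
definition SS :: "nat \<Rightarrow> real list \<Rightarrow> nat set" where
  "SS q ys = {c. c < 2^q \<and> (\<forall>j<length ys. (ys!j = 0) = (c div 2^j mod 2 = 0))}"
definition col :: "nat \<Rightarrow> real list \<Rightarrow> nat" where
  "col q ys = (SOME c. c \<in> SS q ys)"

lemma bits_unique: "(c1::nat) < 2^q \<Longrightarrow> c2 < 2^q \<Longrightarrow> (\<forall>j<q. (c1 div 2^j mod 2 = 0) = (c2 div 2^j mod 2 = 0)) \<Longrightarrow> c1 = c2"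
proof (induction q arbitrary: c1 c2)
  case 0 then show ?case by (simp add: less_one)
next
  case (Suc q)
  have "c1 div 2 = c2 div 2"
  proof (rule Suc.IH)
    show "c1 div 2 < 2^q" "c2 div 2 < 2^q" using Suc.prems by auto
    show "\<forall>j<q. (c1 div 2 div 2 ^ j mod 2 = 0) = (c2 div 2 div 2 ^ j mod 2 = 0)"
    proof (intro allI impI)
      fix j assume "j < q"
      then have "(c1 div 2^(Suc j) mod 2 = 0) = (c2 div 2^(Suc j) mod 2 = 0)" using Suc.prems(3) by auto
      then show "(c1 div 2 div 2 ^ j mod 2 = 0) = (c2 div 2 div 2 ^ j mod 2 = 0)"
        by (simp add: div_mult2_eq)
    qed
  qed
  moreover have "(c1 mod 2 = 0) = (c2 mod 2 = 0)" using Suc.prems(3)[rule_format, of 0] by simp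
  ultimately show ?case by (metis div_mult_mod_eq mod2_eq_if)
qed

lemma hh_inj: "d > 0 \<Longrightarrow> hh d k = hh d k' \<Longrightarrow> k = k'"
  unfolding hh_def by (simp add: field_simps)

lemma hh_bounds: "d > 0 \<Longrightarrow> 0 < hh d k \<and> hh d k \<le> d"
  unfolding hh_def by (simp add: field_simps)

lemma pow_ge: "real m + 1 \<le> 2 ^ nat \<lceil>log 2 (real m + 1)\<rceil>"
proof -
  have "real m + 1 = 2 powr log 2 (real m + 1)" by simp
  also have "\<dots> \<le> 2 powr real_of_int \<lceil>log 2 (real m + 1)\<rceil>" by (intro powr_mono) auto
  also have "real_of_int \<lceil>log 2 (real m + 1)\<rceil> = real (nat \<lceil>log 2 (real m + 1)\<rceil>)" by simp
  also have "2 powr real (nat \<lceil>log 2 (real m + 1)\<rceil>) = 2 ^ nat \<lceil>log 2 (real m + 1)\<rceil>" by (rule powr_realpow) simp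
  finally show ?thesis .
qed

lemma half_aux: "(a::real) \<le> t \<Longrightarrow> t < a + 1 \<Longrightarrow> \<bar>t - a - 1/2\<bar> \<le> 1/2"
  unfolding abs_le_iff by linarith

lemma adaptive_len: "length (adaptive_meas L k x) = k"
  by (induction k) (auto simp: Let_def)

lemma adaptive_Suc: "adaptive_meas L (Suc k) x = adaptive_meas L k x @ [L (adaptive_meas L k x) x]"
  by (simp add: Let_def)

lemma ex_common_pos:
  assumes "finite A" "\<forall>c\<in>A. \<exists>e>0. \<forall>p\<in>Q c. (e::real) \<le> f p"
  shows "\<exists>e>0. \<forall>c\<in>A. \<forall>p\<in>Q c. e \<le> f p"
  using assms
proof (induction A rule: finite_induct)
  case empty then show ?case by (intro exI[of _ 1]) auto
next
  case (insert a A)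
  then obtain e1 where e1: "e1 > 0" "\<forall>c\<in>A. \<forall>p\<in>Q c. e1 \<le> f p" by auto
  obtain e2 where e2: "e2 > 0" "\<forall>p\<in>Q a. e2 \<le> f p" using insert.prems by auto
  show ?case using e1 e2 by (intro exI[of _ "min e1 e2"]) (force simp: min_le_iff_disj)
qed

definition evec :: "nat \<Rightarrow> nat \<Rightarrow> real" where "evec i = (\<lambda>j. if j = i then 1 else 0)"

context
  fixes m :: nat and N :: "(nat \<Rightarrow> real) \<Rightarrow> real"
  assumes nrm: "is_norm_on m N"
begin

lemma vecs_diff: "x \<in> vecs m \<Longrightarrow> y \<in> vecs m \<Longrightarrow> (\<lambda>i. x i - y i) \<in> vecs m"
  by (simp add: vecs_def)
lemma vecs_add: "x \<in> vecs m \<Longrightarrow> y \<in> vecs m \<Longrightarrow> (\<lambda>i. x i + y i) \<in> vecs m"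
  by (simp add: vecs_def)
lemma vecs_scale: "x \<in> vecs m \<Longrightarrow> (\<lambda>i. c * x i) \<in> vecs m"
  by (simp add: vecs_def)

lemma N_nonneg: "x \<in> vecs m \<Longrightarrow> 0 \<le> N x"
  using nrm by (simp add: is_norm_on_def)
lemma N_zero: "N (\<lambda>i. 0) = 0"
  using nrm by (simp add: is_norm_on_def vecs_def)
lemma N_zero_iff: "x \<in> vecs m \<Longrightarrow> N x = 0 \<longleftrightarrow> x = (\<lambda>i. 0)"
  using nrm by (simp add: is_norm_on_def)
lemma N_hom: "x \<in> vecs m \<Longrightarrow> N (\<lambda>i. c * x i) = \<bar>c\<bar> * N x"
  using nrm by (simp add: is_norm_on_def)
lemma N_tri: "x \<in> vecs m \<Longrightarrow> y \<in> vecs m \<Longrightarrow> N (\<lambda>i. x i + y i) \<le> N x + N y"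
  using nrm unfolding is_norm_on_def by blast

lemma N_sym: assumes "x \<in> vecs m" "y \<in> vecs m" shows "N (\<lambda>i. x i - y i) = N (\<lambda>i. y i - x i)"
proof -
  have "N (\<lambda>i. (-1) * (y i - x i)) = N (\<lambda>i. y i - x i)"
    using N_hom[OF vecs_diff[OF assms(2,1)], of "-1"] by simp
  then show ?thesis by simp
qed

lemma N_tri3: assumes "x \<in> vecs m" "y \<in> vecs m" "p \<in> vecs m"
  shows "N (\<lambda>i. x i - p i) \<le> N (\<lambda>i. x i - y i) + N (\<lambda>i. y i - p i)"
  using N_tri[OF vecs_diff[OF assms(1,2)] vecs_diff[OF assms(2,3)]] by simp

lemma N_upper_aux: assumes "z \<in> vecs m" "k \<le> m"
  shows "N (\<lambda>j. if j < k then z j else 0) \<le> (\<Sum>i<k. \<bar>z i\<bar> * N (evec i))"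
  using assms(2)
proof (induction k)
  case 0 then show ?case using N_zero by simp
next
  case (Suc k)
  have e: "evec k \<in> vecs m" using Suc.prems by (auto simp: vecs_def evec_def)
  have t: "(\<lambda>j. if j < k then z j else 0) \<in> vecs m" using Suc.prems by (auto simp: vecs_def)
  have eq: "(\<lambda>j. if j < Suc k then z j else 0) = (\<lambda>j. (if j < k then z j else 0) + z k * evec k j)"
    by (rule ext) (auto simp: evec_def less_Suc_eq)
  have "N (\<lambda>j. if j < Suc k then z j else 0) \<le> N (\<lambda>j. if j < k then z j else 0) + N (\<lambda>j. z k * evec k j)"
    unfolding eq by (rule N_tri[OF t vecs_scale[OF e]])
  also have "\<dots> \<le> (\<Sum>i<k. \<bar>z i\<bar> * N (evec i)) + \<bar>z k\<bar> * N (evec k)"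
    using Suc N_hom[OF e] by simp
  finally show ?case by simp
qed

lemma N_upper: assumes "z \<in> vecs m" shows "N z \<le> (\<Sum>i<m. \<bar>z i\<bar> * N (evec i))"
proof -
  have "(\<lambda>j. if j < m then z j else 0) = z" using assms by (auto simp: vecs_def)
  then show ?thesis using N_upper_aux[OF assms order_refl] by simp
qed

lemma N_upper_unif: assumes "z \<in> vecs m" "\<And>i. i < m \<Longrightarrow> \<bar>z i\<bar> \<le> r"
  shows "N z \<le> r * (\<Sum>i<m. N (evec i))"
proof -
  have "N z \<le> (\<Sum>i<m. \<bar>z i\<bar> * N (evec i))" by (rule N_upper[OF assms(1)])
  also have "\<dots> \<le> (\<Sum>i<m. r * N (evec i))"
    apply (rule sum_mono) apply (rule mult_right_mono)
    using assms(2) N_nonneg by (auto simp: vecs_def evec_def)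
  finally show ?thesis by (simp add: sum_distrib_left)
qed

lemma N_lower_pos: assumes "m \<ge> 1"
  shows "\<exists>c>0. \<forall>z\<in>vecs m. (\<Sum>i<m. \<bar>z i\<bar>) * c \<le> N z"
proof -
  define S where "S = PiE UNIV (\<lambda>i. if i < m then {-1..1} else {0::real})"
  have "compactin (product_topology (\<lambda>i. euclidean) UNIV) S"
    unfolding S_def by (subst compactin_PiE) auto
  then have cS: "compact S" by (simp add: euclidean_product_topology)
  define K where "K = S \<inter> {z. (\<Sum>i<m. \<bar>z i\<bar>) = 1}"
  have "closed {z::nat\<Rightarrow>real. (\<Sum>i<m. \<bar>z i\<bar>) = 1}"
    by (rule closed_Collect_eq) (auto intro!: continuous_intros)
  then have cK: "compact K" unfolding K_def by (rule compact_Int_closed[OF cS])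
  have Kv: "K \<subseteq> vecs m"
  proof
    fix z assume "z \<in> K"
    then have "\<forall>i. z i \<in> (if i < m then {-1..1} else {0})" by (simp add: K_def S_def PiE_UNIV_domain Pi_iff)
    then have "\<And>i. m \<le> i \<Longrightarrow> z i = 0" by (metis leD singletonD)
    then show "z \<in> vecs m" unfolding vecs_def by simp
  qed
  have "evec 0 \<in> K" using assms by (auto simp: K_def S_def evec_def PiE_UNIV_domain Pi_iff)
  then have Kne: "K \<noteq> {}" by auto
  have cont: "continuous_on K N"
    unfolding continuous_on_def
  proof
    fix x assume xK: "x \<in> K"
    then have xv: "x \<in> vecs m" using Kv by auto
    define g where "g = (\<lambda>z. \<Sum>i<m. \<bar>z i - x i\<bar> * N (evec i))"
    have gc: "continuous_on UNIV g" unfolding g_def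
      apply (rule continuous_on_sum)
      apply (rule continuous_on_mult_right)
      apply (rule continuous_on_rabs)
      apply (rule continuous_on_diff)
      apply (rule continuous_on_product_coordinates)
      apply (rule continuous_on_const)
      done
    have "(g \<longlongrightarrow> g x) (at x within K)"
      using gc by (meson UNIV_I continuous_on_def tendsto_within_subset subset_UNIV)
    then have g0: "(g \<longlongrightarrow> 0) (at x within K)" by (simp add: g_def)
    have b: "norm (N z - N x) \<le> g z" if zK: "z \<in> K" for z
    proof -
      have zv: "z \<in> vecs m" using zK Kv by auto
      have "N (\<lambda>i. z i - x i) \<le> g z" unfolding g_def using N_upper[OF vecs_diff[OF zv xv]] by simp
      moreover have "N z \<le> N x + N (\<lambda>i. z i - x i)"
        using N_tri[OF xv vecs_diff[OF zv xv]] by simp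
      moreover have "N x \<le> N z + N (\<lambda>i. x i - z i)"
        using N_tri[OF zv vecs_diff[OF xv zv]] by simp
      moreover have "N (\<lambda>i. x i - z i) = N (\<lambda>i. z i - x i)" by (rule N_sym[OF xv zv])
      ultimately show ?thesis by auto
    qed
    have ev: "eventually (\<lambda>z. norm (N z - N x) \<le> g z) (at x within K)"
      unfolding eventually_at_filter by (rule always_eventually) (use b in force)
    show "(N \<longlongrightarrow> N x) (at x within K)"
      by (rule LIM_zero_cancel, rule Lim_null_comparison[OF ev g0])
  qed
  obtain z0 where z0K: "z0 \<in> K" and z0min: "\<forall>z\<in>K. N z0 \<le> N z"
    using continuous_attains_inf[OF cK Kne cont] by blast
  have "z0 \<noteq> (\<lambda>i. 0)" using z0K by (auto simp: K_def)
  then have cpos: "N z0 > 0" using N_zero_iff[of z0] N_nonneg[of z0] z0K Kv by force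
  show ?thesis
  proof (intro exI[of _ "N z0"] conjI ballI cpos)
    fix z assume zv: "z \<in> vecs m"
    define T where "T = (\<Sum>i<m. \<bar>z i\<bar>)"
    show "(\<Sum>i<m. \<bar>z i\<bar>) * N z0 \<le> N z"
    proof (cases "T = 0")
      case True then show ?thesis using N_nonneg[OF zv] by (simp add: T_def)
    next
      case False
      then have Tpos: "T > 0" unfolding T_def by (metis le_less sum_nonneg abs_ge_zero)
      define z' where "z' = (\<lambda>j. (1/T) * z j)"
      have "z' \<in> K"
      proof -
        have "\<bar>z j\<bar> \<le> T" if "j < m" for j
          unfolding T_def using that by (intro member_le_sum) auto
        then have "z' j \<in> (if j < m then {-1..1} else {0})" for j
          using zv Tpos by (auto simp: z'_def vecs_def abs_le_iff field_simps) (smt (verit))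
        moreover have "(\<Sum>i<m. \<bar>z' i\<bar>) = 1"
          using Tpos by (simp add: z'_def abs_mult sum_divide_distrib[symmetric] T_def[symmetric])
        ultimately show ?thesis by (auto simp: K_def S_def PiE_UNIV_domain)
      qed
      then have "N z0 \<le> N z'" using z0min by auto
      moreover have "N z = T * N z'"
      proof -
        have "(\<lambda>j. T * z' j) = z" using Tpos by (auto simp: z'_def)
        then show ?thesis using N_hom[OF vecs_scale[OF zv], of T "1/T"] Tpos
          by (simp add: z'_def)
      qed
      ultimately show ?thesis using Tpos by (simp add: T_def[symmetric])
    qed
  qed
qed

lemma N_lower: "\<exists>C>0. \<forall>z\<in>vecs m. \<forall>i<m. \<bar>z i\<bar> \<le> C * N z"
proof (cases "m \<ge> 1")
  case True
  then obtain c where c: "c > 0" "\<forall>z\<in>vecs m. (\<Sum>i<m. \<bar>z i\<bar>) * c \<le> N z"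
    using N_lower_pos by blast
  show ?thesis
  proof (intro exI[of _ "1/c"] conjI ballI allI impI)
    fix z i assume zv: "z \<in> vecs m" and i: "i < m"
    have "\<bar>z i\<bar> \<le> (\<Sum>i<m. \<bar>z i\<bar>)" using i by (intro member_le_sum) auto
    then have "\<bar>z i\<bar> * c \<le> N z" using c zv by (meson mult_right_mono less_imp_le order_trans)
    then show "\<bar>z i\<bar> \<le> 1 / c * N z" using c by (simp add: field_simps)
  qed (use c in auto)
next
  case False then show ?thesis by (intro exI[of _ 1]) auto
qed

lemma Fn_le: assumes "P \<subseteq> vecs m" "\<forall>p\<in>P. 0 \<le> a p" "x \<in> vecs m" "p \<in> P"
  shows "Fn N a P x \<le> a p + N (\<lambda>i. x i - p i)"
proof -
  have bdd: "bdd_below ((\<lambda>p. a p + N (\<lambda>i. x i - p i)) ` P)"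
  proof (rule bdd_belowI[of _ 0])
    fix y assume "y \<in> (\<lambda>p. a p + N (\<lambda>i. x i - p i)) ` P"
    then obtain p where p: "p \<in> P" "y = a p + N (\<lambda>i. x i - p i)" by blast
    have pv: "p \<in> vecs m" using assms(1) p(1) by blast
    have "0 \<le> a p" using assms(2) p(1) by blast
    moreover have "0 \<le> N (\<lambda>i. x i - p i)" by (rule N_nonneg[OF vecs_diff[OF assms(3) pv]])
    ultimately show "0 \<le> y" using p(2) by simp
  qed
  have ne: "P \<noteq> {}" using assms(4) by blast
  have "Inf ((\<lambda>p. a p + N (\<lambda>i. x i - p i)) ` P) \<le> a p + N (\<lambda>i. x i - p i)"
    by (rule cInf_lower[OF imageI[OF assms(4)] bdd])
  then show ?thesis using ne by (simp add: Fn_def)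
qed

lemma Fn_ge: assumes "P \<noteq> {}" "\<forall>p\<in>P. e \<le> a p + N (\<lambda>i. x i - p i)"
  shows "e \<le> Fn N a P x"
proof -
  have "e \<le> Inf ((\<lambda>p. a p + N (\<lambda>i. x i - p i)) ` P)"
    using assms by (intro cInf_greatest) auto
  then show ?thesis using assms(1) by (simp add: Fn_def)
qed

lemma Fn_lip1: assumes "P \<subseteq> vecs m" "\<forall>p\<in>P. 0 \<le> a p" "x \<in> vecs m" "y \<in> vecs m"
  shows "Fn N a P x \<le> Fn N a P y + N (\<lambda>i. x i - y i)"
proof (cases "P = {}")
  case True then show ?thesis using N_nonneg[OF vecs_diff[OF assms(3,4)]] by (simp add: Fn_def)
next
  case False
  have "Fn N a P x - N (\<lambda>i. x i - y i) \<le> Fn N a P y"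
  proof (rule Fn_ge[OF False], intro ballI)
    fix p assume p: "p \<in> P"
    have "Fn N a P x \<le> a p + N (\<lambda>i. x i - p i)" by (rule Fn_le[OF assms(1,2,3) p])
    also have "\<dots> \<le> a p + N (\<lambda>i. x i - y i) + N (\<lambda>i. y i - p i)"
      using N_tri3[OF assms(3,4)] p assms(1) by force
    finally show "Fn N a P x - N (\<lambda>i. x i - y i) \<le> a p + N (\<lambda>i. y i - p i)" by simp
  qed
  then show ?thesis by simp
qed

lemma Fn_lip: assumes "P \<subseteq> vecs m" "\<forall>p\<in>P. 0 \<le> a p" "x \<in> vecs m" "y \<in> vecs m"
  shows "\<bar>Fn N a P x - Fn N a P y\<bar> \<le> N (\<lambda>i. x i - y i)"
  using Fn_lip1[OF assms] Fn_lip1[OF assms(1,2,4,3)] N_sym[OF assms(3,4)] by simp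

context
  fixes s C :: real and M :: nat
  assumes spos: "s > 0" and Cpos: "C > 0" and Mpos: "M > 0"
    and Clow: "\<forall>z\<in>vecs m. \<forall>i<m. \<bar>z i\<bar> \<le> C * N z"
begin

lemma UU_sub: "UU m s M c \<subseteq> vecs m" by (auto simp: UU_def)
lemma WW_sub: "WW m s M A \<subseteq> vecs m" by (auto simp: WW_def UU_def)

lemma coord_le: assumes "x \<in> vecs m" "p \<in> vecs m" "i < m"
  shows "\<bar>x i - p i\<bar> \<le> C * N (\<lambda>i. x i - p i)"
  using Clow vecs_diff[OF assms(1,2)] assms(3) by auto

lemma UU_sep: assumes "x \<in> UU m s M c" "p \<in> UU m s M c" "key m s M c x \<noteq> key m s M c p"
  shows "s / (M * C) \<le> N (\<lambda>i. x i - p i)"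
proof -
  have "\<exists>i\<in>set [0..<m]. \<lfloor>tco s M c x i\<rfloor> \<noteq> \<lfloor>tco s M c p i\<rfloor>"
    using assms(3) map_eq_conv unfolding key_def by blast
  then obtain i where i: "i < m" "\<lfloor>tco s M c x i\<rfloor> \<noteq> \<lfloor>tco s M c p i\<rfloor>"
    by auto
  have "2 * (1 / (2 * M)) \<le> \<bar>tco s M c x i - tco s M c p i\<bar>"
    by (rule floor_sep) (use assms i in \<open>auto simp: UU_def\<close>)
  also have "\<bar>tco s M c x i - tco s M c p i\<bar> = \<bar>x i - p i\<bar> / s"
    using spos by (simp add: tco_def diff_divide_distrib[symmetric])
  finally have "s / M \<le> \<bar>x i - p i\<bar>" using spos Mpos by (simp add: field_simps)
  also have "\<dots> \<le> C * N (\<lambda>i. x i - p i)" by (rule coord_le) (use assms i UU_sub in auto)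
  finally show ?thesis using Cpos Mpos by (simp add: field_simps)
qed

lemma UU_out: assumes "x \<in> vecs m" "x \<notin> UU m s M c"
  shows "\<exists>e>0. \<forall>p\<in>UU m s M c. e \<le> N (\<lambda>i. x i - p i)"
proof -
  obtain i where i: "i < m" "rho (tco s M c x i) < 1 / (2 * M)"
    using assms by (auto simp: UU_def not_le)
  define e where "e = s * (1 / (2 * M) - rho (tco s M c x i)) / C"
  show ?thesis
  proof (intro exI[of _ e] conjI ballI)
    show "e > 0" unfolding e_def using spos Cpos i by simp
    fix p assume p: "p \<in> UU m s M c"
    have "1 / (2 * M) \<le> rho (tco s M c p i)" using p i by (auto simp: UU_def)
    also have "\<dots> \<le> rho (tco s M c x i) + \<bar>tco s M c p i - tco s M c x i\<bar>"
      using rho_lip[of "tco s M c p i" "tco s M c x i"] by linarith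
    also have "\<bar>tco s M c p i - tco s M c x i\<bar> = \<bar>x i - p i\<bar> / s"
      using spos by (simp add: tco_def diff_divide_distrib[symmetric] abs_minus_commute)
    finally have "s * (1 / (2 * M) - rho (tco s M c x i)) \<le> \<bar>x i - p i\<bar>"
      using spos by (simp add: field_simps)
    also have "\<dots> \<le> C * N (\<lambda>i. x i - p i)" by (rule coord_le) (use assms p i UU_sub in auto)
    finally show "e \<le> N (\<lambda>i. x i - p i)" unfolding e_def using Cpos by (simp add: field_simps)
  qed
qed

lemma WW_zero: assumes "x \<in> WW m s M A" shows "Fn N (\<lambda>_. 0) (WW m s M A) x = 0"
proof (rule antisym)
  have xv: "x \<in> vecs m" using assms WW_sub by blast
  have "Fn N (\<lambda>_. 0) (WW m s M A) x \<le> 0 + N (\<lambda>i. x i - x i)"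
    by (rule Fn_le[OF WW_sub _ xv assms]) simp
  then show "Fn N (\<lambda>_. 0) (WW m s M A) x \<le> 0" using N_zero by simp
  show "0 \<le> Fn N (\<lambda>_. 0) (WW m s M A) x"
  proof (rule Fn_ge)
    show "WW m s M A \<noteq> {}" using assms by blast
    show "\<forall>p\<in>WW m s M A. 0 \<le> 0 + N (\<lambda>i. x i - p i)"
    proof
      fix p assume "p \<in> WW m s M A"
      then have pv: "p \<in> vecs m" using WW_sub by blast
      show "0 \<le> 0 + N (\<lambda>i. x i - p i)" using N_nonneg[OF vecs_diff[OF xv pv]] by simp
    qed
  qed
qed

lemma WW_pos: assumes "finite A" "x \<in> vecs m" "x \<notin> WW m s M A"
  shows "0 < Fn N (\<lambda>_. 0) (WW m s M A) x"
proof (cases "WW m s M A = {}")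
  case True then show ?thesis by (simp add: Fn_def)
next
  case False
  have ex: "\<forall>c\<in>A. \<exists>e>0. \<forall>p\<in>UU m s M c. e \<le> N (\<lambda>i. x i - p i)"
  proof
    fix c assume "c \<in> A"
    then have "x \<notin> UU m s M c" using assms(3) unfolding WW_def by blast
    then show "\<exists>e>0. \<forall>p\<in>UU m s M c. e \<le> N (\<lambda>i. x i - p i)" by (rule UU_out[OF assms(2)])
  qed
  have "\<exists>e>0. \<forall>c\<in>A. \<forall>p\<in>UU m s M c. e \<le> N (\<lambda>i. x i - p i)"
    by (rule ex_common_pos[OF assms(1) ex])
  then obtain e where e: "e > 0" "\<forall>c\<in>A. \<forall>p\<in>UU m s M c. e \<le> N (\<lambda>i. x i - p i)"
    by blast
  have "\<forall>p\<in>WW m s M A. e \<le> 0 + N (\<lambda>i. x i - p i)"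
  proof
    fix p assume "p \<in> WW m s M A"
    then obtain c where "c \<in> A" "p \<in> UU m s M c" unfolding WW_def by blast
    then show "e \<le> 0 + N (\<lambda>i. x i - p i)" using e(2) by simp
  qed
  then have "e \<le> Fn N (\<lambda>_. 0) (WW m s M A) x" by (rule Fn_ge[OF False])
  then show ?thesis using e by simp
qed

lemma final_val: assumes "x \<in> UU m s M c"
  shows "Fn N (\<lambda>p. hh (s / (M * C)) (key m s M c p)) (UU m s M c) x = hh (s / (M * C)) (key m s M c x)"
proof -
  define d where "d = s / (M * C)"
  have xv: "x \<in> vecs m" using assms UU_sub by blast
  have dpos: "d > 0" unfolding d_def using spos Cpos Mpos by (intro divide_pos_pos mult_pos_pos) auto
  have nn: "\<forall>p\<in>UU m s M c. 0 \<le> hh d (key m s M c p)"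
  proof
    fix p show "0 \<le> hh d (key m s M c p)" using hh_bounds[OF dpos, of "key m s M c p"] by linarith
  qed
  have "Fn N (\<lambda>p. hh d (key m s M c p)) (UU m s M c) x \<le> hh d (key m s M c x) + N (\<lambda>i. x i - x i)"
    by (rule Fn_le[OF UU_sub nn xv assms])
  moreover have "N (\<lambda>i. x i - x i) = 0" using N_zero by simp
  ultimately have le: "Fn N (\<lambda>p. hh d (key m s M c p)) (UU m s M c) x \<le> hh d (key m s M c x)"
    by linarith
  have ge: "hh d (key m s M c x) \<le> Fn N (\<lambda>p. hh d (key m s M c p)) (UU m s M c) x"
  proof (rule Fn_ge)
    show "UU m s M c \<noteq> {}" using assms by blast
    show "\<forall>p\<in>UU m s M c. hh d (key m s M c x) \<le> hh d (key m s M c p) + N (\<lambda>i. x i - p i)"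
    proof
      fix p assume p: "p \<in> UU m s M c"
      have pv: "p \<in> vecs m" using p UU_sub by blast
      have Np: "0 \<le> N (\<lambda>i. x i - p i)" by (rule N_nonneg[OF vecs_diff[OF xv pv]])
      have h1: "0 < hh d (key m s M c p)" "hh d (key m s M c x) \<le> d" using hh_bounds[OF dpos] by auto
      show "hh d (key m s M c x) \<le> hh d (key m s M c p) + N (\<lambda>i. x i - p i)"
      proof (cases "key m s M c x = key m s M c p")
        case True then show ?thesis using Np by simp
      next
        case False
        have "d \<le> N (\<lambda>i. x i - p i)" unfolding d_def by (rule UU_sep[OF assms p False])
        then show ?thesis using h1 by linarith
      qed
    qed
  qed
  from le ge have "Fn N (\<lambda>p. hh d (key m s M c p)) (UU m s M c) x = hh d (key m s M c x)"
    by (rule antisym)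
  then show ?thesis by (simp only: d_def)
qed

lemma rep_close: assumes "x \<in> vecs m"
  shows "N (\<lambda>i. x i - rep m s M c (key m s M c x) i) \<le> s / 2 * (\<Sum>i<m. N (evec i))"
proof (rule N_upper_unif)
  show "(\<lambda>i. x i - rep m s M c (key m s M c x) i) \<in> vecs m"
    using assms by (simp add: vecs_def rep_def)
  fix i assume i: "i < m"
  define t where "t = tco s M c x i"
  have k: "key m s M c x ! i = \<lfloor>t\<rfloor>" using i by (simp add: key_def t_def)
  have r: "rep m s M c (key m s M c x) i = s * (of_int \<lfloor>t\<rfloor> + real c / M + 1/2)"
    using i by (simp only: rep_def k if_True)
  have xi: "x i = s * (t + real c / M)" using spos by (simp add: t_def tco_def)
  have eq: "x i - rep m s M c (key m s M c x) i = s * (t - of_int \<lfloor>t\<rfloor> - 1/2)"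
    unfolding r xi by (simp only: right_diff_distrib[symmetric]) simp
  have b: "\<bar>t - of_int \<lfloor>t\<rfloor> - 1/2\<bar> \<le> 1/2"
    by (rule half_aux[OF of_int_floor_le real_of_int_floor_add_one_gt])
  have "\<bar>x i - rep m s M c (key m s M c x) i\<bar> = s * \<bar>t - of_int \<lfloor>t\<rfloor> - 1/2\<bar>"
    unfolding eq abs_mult using spos by simp
  also have "\<dots> \<le> s * (1/2)" by (rule mult_left_mono[OF b]) (use spos in simp)
  finally show "\<bar>x i - rep m s M c (key m s M c x) i\<bar> \<le> s / 2" by simp
qed

end

lemma SS_snoc: "c \<in> SS q (ys @ [y]) \<longleftrightarrow> c \<in> SS q ys \<and> ((y = 0) = (c div 2^(length ys) mod 2 = 0))"
  unfolding SS_def by (auto simp: nth_append less_Suc_eq)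

lemma main: assumes eps: "\<epsilon> > 0"
  shows "\<exists>k L \<Phi>. k \<le> nat \<lceil>log 2 (real m + 1)\<rceil> + 1 \<and>
     (\<forall>ys. \<forall>x\<in>vecs m. \<forall>y\<in>vecs m. \<bar>L ys x - L ys y\<bar> \<le> N (\<lambda>i. x i - y i)) \<and>
     (\<forall>ys. \<Phi> ys \<in> vecs m) \<and>
     (\<forall>x\<in>vecs m. N (\<lambda>i. x i - \<Phi> (adaptive_meas L k x) i) \<le> \<epsilon>)"
proof -
  obtain C where C: "C > 0" "\<forall>z\<in>vecs m. \<forall>i<m. \<bar>z i\<bar> \<le> C * N z" using N_lower by blast
  define q where "q = nat \<lceil>log 2 (real m + 1)\<rceil>"
  define M :: nat where "M = 2^q"
  have "real m + 1 \<le> real M" using pow_ge[of m] unfolding M_def q_def by simp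
  then have Mgt: "M > m" by simp
  then have Mpos: "M > 0" by simp
  define B where "B = (\<Sum>i<m. N (evec i))"
  have B0: "B \<ge> 0" unfolding B_def
    by (rule sum_nonneg, rule N_nonneg) (auto simp: vecs_def evec_def)
  define s where "s = \<epsilon> / (B + 1)"
  have spos: "s > 0" unfolding s_def using eps B0 by simp
  define d where "d = s / (M * C)"
  have dpos: "d > 0" unfolding d_def using spos C Mpos by simp
  define A where "A ys = {c \<in> SS q ys. c div 2^(length ys) mod 2 = 0}" for ys
  define L where "L ys x = (if length ys < q then Fn N (\<lambda>_. 0) (WW m s M (A ys)) x
      else Fn N (\<lambda>p. hh d (key m s M (col q ys) p)) (UU m s M (col q ys)) x)" for ys x
  define \<Phi> where "\<Phi> ys = rep m s M (col q (take q ys)) (SOME k. hh d k = ys ! q)" for ys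
  note UUs = UU_sub[OF spos C(1) Mpos C(2)]
  note WWs = WW_sub[OF spos C(1) Mpos C(2)]
  have finA: "finite (A ys)" for ys unfolding A_def SS_def by auto
  show ?thesis
  proof (intro exI[of _ "Suc q"] exI[of _ L] exI[of _ \<Phi>] conjI ballI allI)
    show "Suc q \<le> nat \<lceil>log 2 (real m + 1)\<rceil> + 1" by (simp add: q_def)
  next
    fix ys x y assume xv: "x \<in> vecs m" and yv: "y \<in> vecs m"
    show "\<bar>L ys x - L ys y\<bar> \<le> N (\<lambda>i. x i - y i)"
    proof (cases "length ys < q")
      case True
      then show ?thesis unfolding L_def using Fn_lip[OF WWs _ xv yv, where a="\<lambda>_. 0"] by simp
    next
      case False
      have "\<forall>p\<in>UU m s M (col q ys). 0 \<le> hh d (key m s M (col q ys) p)"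
        using hh_bounds[OF dpos] less_imp_le by auto
      then show ?thesis unfolding L_def using False Fn_lip[OF UUs _ xv yv] by simp
    qed
  next
    fix ys show "\<Phi> ys \<in> vecs m" by (simp add: \<Phi>_def rep_def vecs_def)
  next
    fix x assume xv: "x \<in> vecs m"
    define meas where "meas j = adaptive_meas L j x" for j
    have len: "length (meas j) = j" for j unfolding meas_def by (rule adaptive_len)
    have inv: "j \<le> q \<Longrightarrow> \<exists>c\<in>SS q (meas j). x \<in> UU m s M c" for j
    proof (induction j)
      case 0
      obtain c where c: "c < M" "\<forall>i<m. 1 / (2 * M) \<le> rho (x i / s - real c / M)"
        using covering[OF Mgt, of "\<lambda>i. x i / s"] by blast
      have "x \<in> UU m s M c" using c xv by (simp add: UU_def tco_def)
      moreover have "c \<in> SS q (meas 0)" using c by (simp add: meas_def SS_def M_def)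
      ultimately show ?case by blast
    next
      case (Suc j)
      then obtain c where c: "c \<in> SS q (meas j)" "x \<in> UU m s M c" by auto
      define ys where "ys = meas j"
      have lj: "length ys = j" "length ys < q" using len Suc.prems by (auto simp: ys_def)
      define y where "y = L ys x"
      have yv: "y = Fn N (\<lambda>_. 0) (WW m s M (A ys)) x" using lj by (simp add: y_def L_def)
      have ms: "meas (Suc j) = ys @ [y]" by (simp add: meas_def ys_def y_def Let_def)
      have cs: "c \<in> SS q ys" using c by (simp add: ys_def)
      show ?case
      proof (cases "c div 2^(length ys) mod 2 = 0")
        case True
        then have "c \<in> A ys" using cs by (simp add: A_def)
        then have "x \<in> WW m s M (A ys)" using c(2) by (auto simp: WW_def)
        then have "y = 0" using yv WW_zero[OF spos C(1) Mpos C(2)] by simp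
        then have "c \<in> SS q (meas (Suc j))" using ms cs True by (simp add: SS_snoc)
        then show ?thesis using c(2) by blast
      next
        case False
        show ?thesis
        proof (cases "y = 0")
          case False2: False
          then have "c \<in> SS q (meas (Suc j))" using ms cs False2 False by (simp add: SS_snoc)
          then show ?thesis using c(2) by blast
        next
          case True
          have "x \<in> WW m s M (A ys)"
          proof (rule ccontr)
            assume "x \<notin> WW m s M (A ys)"
            then have "0 < y" using yv WW_pos[OF spos C(1) Mpos C(2) finA xv] by simp
            then show False using True by simp
          qed
          then obtain c' where c': "c' \<in> A ys" "x \<in> UU m s M c'" by (auto simp: WW_def)
          then have "c' \<in> SS q (meas (Suc j))" using ms True by (simp add: SS_snoc A_def)
          then show ?thesis using c'(2) by blast
        qed
      qed
    qed
    obtain c where c: "c \<in> SS q (meas q)" "x \<in> UU m s M c" using inv[OF order_refl] by blast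
    define ys where "ys = meas q"
    have lq: "length ys = q" by (simp add: ys_def len)
    have colin: "col q ys \<in> SS q ys" unfolding col_def by (rule someI[of _ c]) (use c in \<open>simp add: ys_def\<close>)
    have colc: "col q ys = c"
    proof (rule bits_unique[of _ q])
      show "col q ys < 2^q" "c < 2^q" using colin c(1) by (auto simp: SS_def ys_def)
      show "\<forall>j<q. (col q ys div 2 ^ j mod 2 = 0) = (c div 2 ^ j mod 2 = 0)"
        using colin c(1) lq by (auto simp: SS_def ys_def)
    qed
    define y where "y = L ys x"
    have yval: "y = hh d (key m s M c x)"
      using lq colc final_val[OF spos C(1) Mpos C(2) c(2)] by (simp add: y_def L_def d_def)
    have ms: "adaptive_meas L (Suc q) x = ys @ [y]" by (simp add: meas_def ys_def y_def Let_def)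
    have sk: "(SOME k. hh d k = y) = key m s M c x"
    proof -
      have "hh d (SOME k. hh d k = y) = y" by (rule someI[of _ "key m s M c x"]) (simp add: yval)
      then show ?thesis using hh_inj[OF dpos] yval by metis
    qed
    have phi: "\<Phi> (adaptive_meas L (Suc q) x) = rep m s M c (key m s M c x)"
    proof -
      have "(ys @ [y]) ! q = y" using lq by (simp add: nth_append)
      then show ?thesis unfolding ms \<Phi>_def using lq colc sk by simp
    qed
    have "N (\<lambda>i. x i - rep m s M c (key m s M c x) i) \<le> s / 2 * B"
      unfolding B_def by (rule rep_close[OF spos C(1) Mpos C(2) xv])
    also have "\<dots> \<le> \<epsilon>"
    proof -
      have "s / 2 * B = \<epsilon> * (B / (2 * (B + 1)))" using B0 by (simp add: s_def field_simps)
      also have "\<dots> \<le> \<epsilon> * 1" using B0 eps by (intro mult_left_mono) (auto simp: field_simps)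
      finally show ?thesis by simp
    qed
    finally show "N (\<lambda>i. x i - \<Phi> (adaptive_meas L (Suc q) x) i) \<le> \<epsilon>" unfolding phi .
  qed
qed

end

theorem theorem1:
  fixes m :: nat and N :: "(nat \<Rightarrow> real) \<Rightarrow> real" and \<epsilon> :: real
  assumes "is_norm_on m N" and "\<epsilon> > 0"
  shows "\<exists>k L \<Phi>. k \<le> nat \<lceil>log 2 (real m + 1)\<rceil> + 1 \<and>
     (\<forall>ys. \<forall>x\<in>vecs m. \<forall>y\<in>vecs m. \<bar>L ys x - L ys y\<bar> \<le> N (\<lambda>i. x i - y i)) \<and>
     (\<forall>ys. \<Phi> ys \<in> vecs m) \<and>
     (\<forall>x\<in>vecs m. N (\<lambda>i. x i - \<Phi> (adaptive_meas L k x) i) \<le> \<epsilon>)"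
  using main[OF assms(1) assms(2)] .

end
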